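(* Let $G$ be a tree on $n$ vertices. Then $G\in\mathcal{G}^{\rm SSP}$ if and only if $G$ contains no vertex of degree at least four and does not contain two vertices of degree three.
   Context: All graphs are finite, simple, undirected. For a graph $G$ on $\{1,\ldots,n\}$, $\mathcal{S}(G)$ is the set of real symmetric $n\times n$ matrices $A=(a_{ij})$ with $a_{ij}\neq0$ iff $\{i,j\}\in E(G)$ for $i\neq j$ (diagonal arbitrary). A real symmetric $A$ has the strong spectral property (SSP) if the only real symmetric $X$ with $A\circ X=0$, $I\circ X=0$, $AX-XA=0$ is $X=0$ ($\circ$ = entrywise product). $\mathcal{G}^{\rm SSP}$ is the set of graphs $G$ such that every matrix in $\mathcal{S}(G)$ has the SSP. *)

theory Defs
  imports "HOL-Analysis.Analysis"
begin

text \<open>A finite simple graph on the vertex type 'n (vertex set UNIV, of size CARD('n)),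
  given by a symmetric irreflexive adjacency relation.\<close>

definition simple_graph :: "('n::finite \<Rightarrow> 'n \<Rightarrow> bool) \<Rightarrow> bool" where
  "simple_graph E \<longleftrightarrow> (\<forall>i j. E i j \<longrightarrow> E j i) \<and> (\<forall>i. \<not> E i i)"

definition connected_graph :: "('n::finite \<Rightarrow> 'n \<Rightarrow> bool) \<Rightarrow> bool" where
  "connected_graph E \<longleftrightarrow> (\<forall>u v. E\<^sup>*\<^sup>* u v)"

definition is_cycle :: "('n \<Rightarrow> 'n \<Rightarrow> bool) \<Rightarrow> 'n list \<Rightarrow> bool" where
  "is_cycle E vs \<longleftrightarrow> length vs \<ge> 3 \<and> distinct vs
     \<and> (\<forall>k. Suc k < length vs \<longrightarrow> E (vs ! k) (vs ! Suc k))
     \<and> E (last vs) (hd vs)"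

definition acyclic_graph :: "('n::finite \<Rightarrow> 'n \<Rightarrow> bool) \<Rightarrow> bool" where
  "acyclic_graph E \<longleftrightarrow> (\<nexists>vs. is_cycle E vs)"

definition is_tree :: "('n::finite \<Rightarrow> 'n \<Rightarrow> bool) \<Rightarrow> bool" where
  "is_tree E \<longleftrightarrow> simple_graph E \<and> connected_graph E \<and> acyclic_graph E"

definition degree :: "('n::finite \<Rightarrow> 'n \<Rightarrow> bool) \<Rightarrow> 'n \<Rightarrow> nat" where
  "degree E v = card {w. E v w}"

definition symmetric_mat :: "real^'n^'n \<Rightarrow> bool" where
  "symmetric_mat A \<longleftrightarrow> transpose A = A"

definition S_graph :: "('n::finite \<Rightarrow> 'n \<Rightarrow> bool) \<Rightarrow> (real^'n^'n) set" where
  "S_graph E = {A. symmetric_mat A \<and> (\<forall>i j. i \<noteq> j \<longrightarrow> (A$i$j \<noteq> 0 \<longleftrightarrow> E i j))}"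

definition SSP :: "real^'n^'n \<Rightarrow> bool" where
  "SSP A \<longleftrightarrow> (\<forall>X::real^'n^'n. symmetric_mat X
      \<and> (\<forall>i j. A$i$j * X$i$j = 0) \<and> (\<forall>i. X$i$i = 0)
      \<and> A ** X - X ** A = 0 \<longrightarrow> X = 0)"

definition in_G_SSP :: "('n::finite \<Rightarrow> 'n \<Rightarrow> bool) \<Rightarrow> bool" where
  "in_G_SSP E \<longleftrightarrow> (\<forall>A \<in> S_graph E. SSP A)"

end

theory Submission
  imports Defs
begin
lemma walk_to_path:
  assumes "R\<^sup>*\<^sup>* a b"
  shows "\<exists>ps. ps \<noteq> [] \<and> hd ps = a \<and> last ps = b \<and> distinct ps \<and>
          (\<forall>k. Suc k < length ps \<longrightarrow> R (ps!k) (ps!Suc k))"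
  using assms
proof (induction rule: rtranclp_induct)
  case base
  then show ?case by (intro exI[of _ "[a]"]) auto
next
  case (step y z)
  then obtain ps where ps: "ps \<noteq> []" "hd ps = a" "last ps = y" "distinct ps"
    "\<forall>k. Suc k < length ps \<longrightarrow> R (ps!k) (ps!Suc k)" by blast
  show ?case
  proof (cases "z \<in> set ps")
    case True
    then obtain i where i: "i < length ps" "ps!i = z" by (auto simp: in_set_conv_nth)
    let ?qs = "take (Suc i) ps"
    have "last ?qs = ?qs ! (length ?qs - 1)" using ps(1) by (intro last_conv_nth) simp
    moreover have "length ?qs - 1 = i" using i by simp
    ultimately have "last ?qs = z" using i by simp
    moreover have "hd ?qs = a" using ps i by (simp add: hd_conv_nth)
    moreover have "?qs \<noteq> []" using ps by simp
    moreover have "distinct ?qs" using ps by simp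
    moreover have "\<forall>k. Suc k < length ?qs \<longrightarrow> R (?qs!k) (?qs!Suc k)" using ps(5) by auto
    ultimately show ?thesis by blast
  next
    case False
    let ?qs = "ps @ [z]"
    have "\<forall>k. Suc k < length ?qs \<longrightarrow> R (?qs!k) (?qs!Suc k)"
    proof (intro allI impI)
      fix k assume k: "Suc k < length ?qs"
      show "R (?qs!k) (?qs!Suc k)"
      proof (cases "Suc k < length ps")
        case True then show ?thesis using ps(5) k by (simp add: nth_append)
      next
        case False
        then have "k = length ps - 1" using k by simp
        then show ?thesis using ps step(2) by (simp add: nth_append last_conv_nth)
      qed
    qed
    then show ?thesis using ps False by (intro exI[of _ ?qs]) auto
  qed
qed

lemma nbrs_not_connected:
  assumes ac: "acyclic_graph E" and sym: "\<forall>i j. E i j \<longrightarrow> E j i"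
    and va: "E v a" and vb: "E v b" and ab: "a \<noteq> b"
    and conn: "(\<lambda>x y. E x y \<and> x \<noteq> v \<and> y \<noteq> v)\<^sup>*\<^sup>* a b"
  shows False
proof -
  obtain ps where ps: "ps \<noteq> []" "hd ps = a" "last ps = b" "distinct ps"
    "\<forall>k. Suc k < length ps \<longrightarrow> E (ps!k) (ps!Suc k) \<and> ps!k \<noteq> v \<and> ps!Suc k \<noteq> v"
    using walk_to_path[OF conn] by blast
  have len: "length ps \<ge> 2"
  proof (rule ccontr)
    assume "\<not> length ps \<ge> 2"
    moreover have "length ps \<noteq> 0" using ps(1) by simp
    ultimately have "length ps = 1" by arith
    then have "hd ps = last ps" by (cases ps) auto
    then show False using ps ab by simp
  qed
  have nv: "v \<notin> set ps"
  proof
    assume "v \<in> set ps"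
    then obtain k where k: "k < length ps" "ps!k = v" by (auto simp: in_set_conv_nth)
    show False
    proof (cases "Suc k < length ps")
      case True then show ?thesis using ps(5) k by blast
    next
      case False
      then have "Suc (k - 1) < length ps" "Suc (k-1) = k" using k len by auto
      then show ?thesis using ps(5) k by metis
    qed
  qed
  have "is_cycle E (v # ps)"
    unfolding is_cycle_def
  proof (intro conjI allI impI)
    show "3 \<le> length (v # ps)" using len by simp
    show "distinct (v # ps)" using nv ps by simp
    show "E (last (v # ps)) (hd (v # ps))" using ps vb sym by simp
  next
    fix k assume k: "Suc k < length (v # ps)"
    show "E ((v # ps) ! k) ((v # ps) ! Suc k)"
    proof (cases k)
      case 0 then show ?thesis using va ps by (simp add: hd_conv_nth)
    next
      case (Suc m) then show ?thesis using ps(5) k by simp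
    qed
  qed
  then show False using ac unfolding acyclic_graph_def by blast
qed

locale rtree =
  fixes E :: "'n::finite \<Rightarrow> 'n \<Rightarrow> bool" and r :: 'n
  assumes tree: "is_tree E"
begin

lemma symE: "E x y \<Longrightarrow> E y x"
  using tree unfolding is_tree_def simple_graph_def by blast
lemma irrE: "\<not> E x x"
  using tree unfolding is_tree_def simple_graph_def by blast
lemma connE: "E\<^sup>*\<^sup>* u v"
  using tree unfolding is_tree_def connected_graph_def by blast
lemma acycE: "acyclic_graph E"
  using tree unfolding is_tree_def by blast

definition depth :: "'n \<Rightarrow> nat" where "depth x = (LEAST n. (E ^^ n) r x)"

lemma depth_ex: "(E ^^ depth x) r x"
proof -
  have "\<exists>n. (E ^^ n) r x" using connE[of r x] by (simp add: rtranclp_power)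
  then show ?thesis unfolding depth_def by (rule LeastI_ex)
qed

lemma depth_le: "(E ^^ n) r x \<Longrightarrow> depth x \<le> n"
  unfolding depth_def by (rule Least_le)

lemma depth_r[simp]: "depth r = 0"
  using depth_le[of 0 r] by simp

lemma depth0: "depth x = 0 \<Longrightarrow> x = r"
  using depth_ex[of x] by (auto elim: relpowp_0_E)

lemma depth_pos: "x \<noteq> r \<Longrightarrow> depth x > 0"
  using depth0 by blast

lemma depth_edge: "E x y \<Longrightarrow> depth y \<le> Suc (depth x)"
  using depth_le relpowp_Suc_I[OF depth_ex[of x]] by blast

lemma par_ex: "x \<noteq> r \<Longrightarrow> \<exists>p. E x p \<and> Suc (depth p) = depth x"
proof -
  assume "x \<noteq> r"
  then obtain n where n: "depth x = Suc n" using depth_pos not0_implies_Suc by blast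
  then have "(E ^^ Suc n) r x" using depth_ex[of x] by simp
  then obtain p where p: "(E ^^ n) r p" "E p x" by (auto elim: relpowp_Suc_E)
  have "depth p \<le> n" using depth_le p(1) .
  moreover have "depth x \<le> Suc (depth p)" using depth_edge p(2) .
  ultimately have "Suc (depth p) = depth x" using n by simp
  then show ?thesis using p(2) symE by blast
qed

definition par :: "'n \<Rightarrow> 'n" where
  "par x = (if x = r then r else (SOME p. E x p \<and> Suc (depth p) = depth x))"

lemma par: "x \<noteq> r \<Longrightarrow> E x (par x) \<and> Suc (depth (par x)) = depth x"
  unfolding par_def using someI_ex[OF par_ex] by auto

lemma par_r[simp]: "par r = r" unfolding par_def by simp

lemma depth_par: "depth (par x) = depth x - 1"
  using par[of x] by (cases "x = r") auto

lemma up_conn: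
  "z \<noteq> v \<Longrightarrow> depth z \<le> depth v \<Longrightarrow> (\<lambda>a b. E a b \<and> a \<noteq> v \<and> b \<noteq> v)\<^sup>*\<^sup>* z r"
proof (induction "depth z" arbitrary: z)
  case 0
  then have "z = r" using depth0 by simp
  then show ?case by simp
next
  case (Suc n)
  then have zr: "z \<noteq> r" by auto
  have pz: "E z (par z)" "Suc (depth (par z)) = depth z" using par[OF zr] by auto
  have pv: "par z \<noteq> v" using pz Suc.prems by auto
  have "(\<lambda>a b. E a b \<and> a \<noteq> v \<and> b \<noteq> v)\<^sup>*\<^sup>* (par z) r"
    using Suc.hyps(1)[of "par z"] pz Suc pv by auto
  then show ?case
    by (rule converse_rtranclp_into_rtranclp[rotated]) (use pz Suc.prems pv in auto)
qed

lemma tree_edge_le: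
  assumes e: "E x y" and le: "depth y \<le> depth x"
  shows "x \<noteq> r \<and> y = par x"
proof -
  have xr: "x \<noteq> r"
  proof
    assume "x = r"
    then have "y = r" using le depth0 by simp
    then show False using e irrE \<open>x = r\<close> by simp
  qed
  have px: "E x (par x)" "Suc (depth (par x)) = depth x" using par[OF xr] by auto
  show ?thesis
  proof (rule ccontr)
    assume "\<not> (x \<noteq> r \<and> y = par x)"
    then have ne: "y \<noteq> par x" using xr by simp
    let ?R = "\<lambda>a b. E a b \<and> a \<noteq> x \<and> b \<noteq> x"
    have yx: "y \<noteq> x" using e irrE by auto
    have 1: "?R\<^sup>*\<^sup>* y r" using up_conn[OF yx le] .
    have pxx: "par x \<noteq> x" using px(2) by (metis n_not_Suc_n)
    have 2: "?R\<^sup>*\<^sup>* (par x) r" using up_conn[of "par x" x] px pxx by auto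
    have symR: "symp ?R" unfolding symp_def using symE by blast
    have "?R\<^sup>*\<^sup>* r (par x)" using 2 sympD[OF symp_rtranclp[OF symR]] by blast
    then have "?R\<^sup>*\<^sup>* y (par x)" using 1 by (rule rtranclp_trans[rotated])
    then show False
      using nbrs_not_connected[OF acycE _ e px(1) ne] symE by blast
  qed
qed

lemma tree_edge: "E x y \<Longrightarrow> (x \<noteq> r \<and> y = par x) \<or> (y \<noteq> r \<and> x = par y)"
proof -
  assume e: "E x y"
  show ?thesis
  proof (cases "depth y \<le> depth x")
    case True then show ?thesis using tree_edge_le[OF e] by blast
  next
    case False
    then have "depth x \<le> depth y" by simp
    then show ?thesis using tree_edge_le[OF symE[OF e]] by blast
  qed
qed

lemma edge_par: "x \<noteq> r \<Longrightarrow> E x (par x)"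
  using par by blast

lemma edge_iff: "E x y \<longleftrightarrow> (x \<noteq> r \<and> y = par x) \<or> (y \<noteq> r \<and> x = par y)"
proof
  assume "E x y" then show "(x \<noteq> r \<and> y = par x) \<or> (y \<noteq> r \<and> x = par y)" by (rule tree_edge)
next
  assume h: "(x \<noteq> r \<and> y = par x) \<or> (y \<noteq> r \<and> x = par y)"
  then show "E x y"
  proof
    assume "x \<noteq> r \<and> y = par x" then show ?thesis using edge_par by blast
  next
    assume "y \<noteq> r \<and> x = par y" then show ?thesis using edge_par symE by blast
  qed
qed

definition anc :: "nat \<Rightarrow> 'n \<Rightarrow> 'n" where "anc k x = (par ^^ k) x"

lemma anc_0[simp]: "anc 0 x = x" unfolding anc_def by simp
lemma anc_Suc: "anc (Suc k) x = par (anc k x)" unfolding anc_def by simp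
lemma anc_Suc': "anc (Suc k) x = anc k (par x)" unfolding anc_def by (simp only: funpow_Suc_right comp_def)
lemma anc_add: "anc (k + j) x = anc k (anc j x)" unfolding anc_def by (simp add: funpow_add)
lemma depth_anc: "depth (anc k x) = depth x - k"
  by (induction k) (auto simp: anc_Suc depth_par)
lemma anc_r: "anc k r = r" by (induction k) (auto simp: anc_Suc)

definition Ch :: "'n \<Rightarrow> 'n set" where "Ch z = {k. k \<noteq> r \<and> par k = z}"

lemma Ch_depth: "k \<in> Ch z \<Longrightarrow> depth k = Suc (depth z)"
proof -
  assume "k \<in> Ch z"
  then have "k \<noteq> r" "par k = z" unfolding Ch_def by auto
  then show ?thesis using par[of k] by simp
qed

lemma nbrs_eq: "{k. E z k} = (if z = r then {} else {par z}) \<union> Ch z"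
proof (intro set_eqI iffI)
  fix k assume "k \<in> {k. E z k}"
  then have "E z k" by simp
  then show "k \<in> (if z = r then {} else {par z}) \<union> Ch z"
    using tree_edge[of z k] unfolding Ch_def by auto
next
  fix k assume "k \<in> (if z = r then {} else {par z}) \<union> Ch z"
  then have "(z \<noteq> r \<and> k = par z) \<or> (k \<noteq> r \<and> z = par k)"
    unfolding Ch_def by (auto split: if_splits)
  then show "k \<in> {k. E z k}" using edge_iff by simp
qed

lemma par_notin_Ch: "par z \<notin> Ch z"
proof
  assume "par z \<in> Ch z"
  then have "depth (par z) = Suc (depth z)" by (rule Ch_depth)
  then show False using depth_par[of z] by simp
qed

end

context rtree begin

definition leg :: "'n \<Rightarrow> 'n" where "leg x = anc (depth x - 1) x"

lemma depth_leg: "depth x \<ge> 1 \<Longrightarrow> depth (leg x) = 1"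
  unfolding leg_def by (simp add: depth_anc)

lemma leg_depth1: "depth x = 1 \<Longrightarrow> leg x = x"
  unfolding leg_def by simp

lemma leg_par: "depth x \<ge> 2 \<Longrightarrow> leg (par x) = leg x"
proof -
  assume d: "depth x \<ge> 2"
  have "leg (par x) = anc (depth x - 2) (par x)" unfolding leg_def by (simp add: depth_par numeral_2_eq_2)
  also have "\<dots> = anc (Suc (depth x - 2)) x" by (simp add: anc_Suc')
  also have "Suc (depth x - 2) = depth x - 1" using d by simp
  finally show ?thesis unfolding leg_def .
qed

lemma leg_anc: "k < depth x \<Longrightarrow> leg (anc k x) = leg x"
proof (induction k)
  case 0 then show ?case by simp
next
  case (Suc k)
  have "depth (anc k x) \<ge> 2" using Suc.prems by (simp add: depth_anc)
  then have "leg (par (anc k x)) = leg (anc k x)" by (rule leg_par)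
  then show ?case using Suc by (simp add: anc_Suc)
qed

lemma leg_ne_r: "depth x \<ge> 1 \<Longrightarrow> leg x \<noteq> r"
  using depth_leg by fastforce

lemma par_leg: "depth x \<ge> 1 \<Longrightarrow> par (leg x) = r"
  using depth_leg[of x] depth_par[of "leg x"] depth0 by simp

lemma leg_Ch: "depth x \<ge> 1 \<Longrightarrow> leg x \<in> Ch r"
  unfolding Ch_def using leg_ne_r par_leg by simp

lemma Ch_r_depth: "b \<in> Ch r \<Longrightarrow> depth b = 1"
  using Ch_depth by fastforce

lemma Ch_r_leg: "b \<in> Ch r \<Longrightarrow> leg b = b"
  using Ch_r_depth leg_depth1 by blast

lemma Ch_ne_r: "k \<in> Ch z \<Longrightarrow> k \<noteq> r"
  unfolding Ch_def by simp

lemma Ch_par: "k \<in> Ch z \<Longrightarrow> par k = z"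
  unfolding Ch_def by simp

lemma leg_child: "k \<in> Ch z \<Longrightarrow> z \<noteq> r \<Longrightarrow> leg k = leg z"
proof -
  assume k: "k \<in> Ch z" and z: "z \<noteq> r"
  have "depth z \<ge> 1" using depth_pos[OF z] by simp
  then have "depth k \<ge> 2" using Ch_depth[OF k] by simp
  then show ?thesis using leg_par Ch_par[OF k] by metis
qed

lemma depth_ge1: "x \<noteq> r \<Longrightarrow> depth x \<ge> 1"
  using depth_pos by fastforce

lemma Ch_r_nbrs: "Ch r = {w. E r w}"
  using nbrs_eq[of r] by simp

end

locale spider = rtree +
  assumes deg2: "z \<noteq> r \<Longrightarrow> card {w. E z w} \<le> 2"
    and deg3: "card {w. E r w} \<le> 3"
begin

lemma inj_leg_depth:
  "x \<noteq> r \<Longrightarrow> y \<noteq> r \<Longrightarrow> leg x = leg y \<Longrightarrow> depth x = depth y \<Longrightarrow> x = y"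
proof (induction "depth x" arbitrary: x y)
  case 0
  then show ?case using depth_pos by fastforce
next
  case (Suc m)
  show ?case
  proof (cases "m = 0")
    case True
    have d1: "depth x = 1" using Suc.hyps(2) True by simp
    then have d2: "depth y = 1" using Suc.prems(4) by simp
    have "x = leg x" using leg_depth1[OF d1] by simp
    also have "\<dots> = leg y" using Suc.prems(3) .
    also have "\<dots> = y" using leg_depth1[OF d2] .
    finally show ?thesis .
  next
    case False
    have dx: "depth x \<ge> 2" "depth y \<ge> 2" using Suc False by auto
    have "depth (par x) \<ge> 1" "depth (par y) \<ge> 1" using dx depth_par[of x] depth_par[of y] by simp_all
    then have px: "par x \<noteq> r" "par y \<noteq> r" by auto
    have "depth (par x) = m" using Suc.hyps(2) depth_par[of x] by simp
    moreover have "leg (par x) = leg (par y)" using leg_par dx Suc.prems by metis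
    moreover have "depth (par x) = depth (par y)" using Suc.prems depth_par by simp
    ultimately have pe: "par x = par y" using Suc.hyps(1)[of "par x" "par y"] px by simp
    show ?thesis
    proof (rule ccontr)
      assume ne: "x \<noteq> y"
      let ?p = "par x"
      have "E ?p x" "E ?p y" using edge_par symE Suc.prems pe by metis+
      moreover have "E ?p (par ?p)" using edge_par px by blast
      moreover have "depth (par ?p) < depth x" "depth (par ?p) < depth y"
        using depth_par[of ?p] depth_par[of x] Suc.prems dx by simp_all
      then have "par ?p \<noteq> x" "par ?p \<noteq> y" by auto
      ultimately have "{x, y, par ?p} \<subseteq> {w. E ?p w}" by auto
      then have "card {x, y, par ?p} \<le> card {w. E ?p w}" by (intro card_mono) auto
      also have "\<dots> \<le> 2" using deg2 px by blast
      finally show False using ne \<open>par ?p \<noteq> x\<close> \<open>par ?p \<noteq> y\<close> by simp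
    qed
  qed
qed

lemma Ch_single: "z \<noteq> r \<Longrightarrow> k \<in> Ch z \<Longrightarrow> k' \<in> Ch z \<Longrightarrow> k = k'"
proof -
  assume z: "z \<noteq> r" and k: "k \<in> Ch z" and k': "k' \<in> Ch z"
  show "k = k'"
  proof (rule inj_leg_depth)
    show "k \<noteq> r" "k' \<noteq> r" using Ch_ne_r k k' by auto
    show "leg k = leg k'" using leg_child[OF k z] leg_child[OF k' z] by simp
    show "depth k = depth k'" using Ch_depth[OF k] Ch_depth[OF k'] by simp
  qed
qed

lemma Ch_cases: "z \<noteq> r \<Longrightarrow> Ch z = {} \<or> (\<exists>k. Ch z = {k})"
  using Ch_single by blast

lemma card_Ch_r: "card (Ch r) \<le> 3"
  using deg3 Ch_r_nbrs by simp

end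

locale ssp_ctx = spider E r for E :: "'n::finite \<Rightarrow> 'n \<Rightarrow> bool" and r +
  fixes A X :: "real^'n^'n"
  assumes AS: "A \<in> S_graph E" and Xsym: "symmetric_mat X"
    and AX0: "\<forall>i j. A$i$j * X$i$j = 0" and Xd: "\<forall>i. X$i$i = 0"
    and comm: "A ** X - X ** A = 0"
begin

lemma Asym: "A$i$j = A$j$i"
proof -
  have "transpose A = A" using AS unfolding S_graph_def symmetric_mat_def by simp
  then have "transpose A $ j $ i = A $ j $ i" by simp
  then show ?thesis by (simp add: transpose_def)
qed

lemma Xsym': "X$i$j = X$j$i"
proof -
  have "transpose X = X" using Xsym unfolding symmetric_mat_def by simp
  then have "transpose X $ j $ i = X $ j $ i" by simp
  then show ?thesis by (simp add: transpose_def)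
qed

lemma A_nz: "E i j \<Longrightarrow> A$i$j \<noteq> 0"
  using AS irrE unfolding S_graph_def by (metis (mono_tags, lifting) mem_Collect_eq)

lemma A_z: "i \<noteq> j \<Longrightarrow> \<not> E i j \<Longrightarrow> A$i$j = 0"
  using AS unfolding S_graph_def by blast

lemma X_edge: "E i j \<Longrightarrow> X$i$j = 0"
  using AX0 A_nz by (metis mult_eq_0_iff)

lemma comm_entry: "(\<Sum>k\<in>UNIV. A$i$k * X$k$j) = (\<Sum>k\<in>UNIV. X$i$k * A$k$j)"
proof -
  have "(A ** X - X ** A) $ i $ j = 0" using comm by simp
  then show ?thesis by (simp add: matrix_matrix_mult_def)
qed

lemma nbr_sum:
  "(\<Sum>k\<in>UNIV. A$z$k * f k) = A$z$z * f z + (if z = r then 0 else A$z$(par z) * f (par z))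
      + (\<Sum>k\<in>Ch z. A$z$k * f k)"
proof -
  let ?N = "(if z = r then {} else {par z}) \<union> Ch z"
  have N: "?N = {k. E z k}" using nbrs_eq by simp
  have zN: "z \<notin> ?N" using N irrE by auto
  have "(\<Sum>k\<in>UNIV. A$z$k * f k) = (\<Sum>k\<in>insert z ?N. A$z$k * f k)"
  proof (rule sum.mono_neutral_right)
    show "\<forall>i\<in>UNIV - insert z ?N. A $ z $ i * f i = 0"
      using A_z N by auto
  qed auto
  also have "\<dots> = A$z$z * f z + (\<Sum>k\<in>?N. A$z$k * f k)"
    using zN by (simp add: sum.insert)
  also have "(\<Sum>k\<in>?N. A$z$k * f k) = (\<Sum>k\<in>(if z = r then {} else {par z}). A$z$k * f k)
      + (\<Sum>k\<in>Ch z. A$z$k * f k)"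
    by (rule sum.union_disjoint) (use par_notin_Ch in auto)
  also have "(\<Sum>k\<in>(if z = r then {} else {par z}). A$z$k * f k) =
      (if z = r then 0 else A$z$(par z) * f (par z))" by simp
  finally show ?thesis by simp
qed

lemma nbr_sum':
  "(\<Sum>k\<in>UNIV. f k * A$k$z) = A$z$z * f z + (if z = r then 0 else A$z$(par z) * f (par z))
      + (\<Sum>k\<in>Ch z. A$z$k * f k)"
proof -
  have "(\<Sum>k\<in>UNIV. f k * A$k$z) = (\<Sum>k\<in>UNIV. A$z$k * f k)"
    by (rule sum.cong) (auto simp: Asym[of _ z] mult.commute)
  then show ?thesis using nbr_sum by simp
qed

definition pi :: "'n \<Rightarrow> real" where
  "pi x = (\<Prod>i<depth x. A$(anc i x)$(anc (Suc i) x))"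

lemma pi_r: "pi r = 1" unfolding pi_def by simp

lemma pi_par: "x \<noteq> r \<Longrightarrow> pi x = A$x$(par x) * pi (par x)"
proof -
  assume xr: "x \<noteq> r"
  then obtain n where n: "depth x = Suc n" using depth_pos not0_implies_Suc by blast
  have dp: "depth (par x) = n" using n depth_par by simp
  have "pi x = (\<Prod>i<Suc n. A$(anc i x)$(anc (Suc i) x))" unfolding pi_def n ..
  also have "\<dots> = A$(anc 0 x)$(anc (Suc 0) x) * (\<Prod>i<n. A$(anc (Suc i) x)$(anc (Suc (Suc i)) x))"
    by (rule prod.lessThan_Suc_shift)
  also have "(\<Prod>i<n. A$(anc (Suc i) x)$(anc (Suc (Suc i)) x)) = pi (par x)"
    unfolding pi_def dp by (simp add: anc_Suc')
  finally show ?thesis by (simp add: anc_Suc)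
qed

lemma pi_nz: "pi x \<noteq> 0"
proof (induction "depth x" arbitrary: x)
  case 0
  then have "x = r" using depth0 by simp
  then show ?case using pi_r by simp
next
  case (Suc n)
  then have xr: "x \<noteq> r" by auto
  have "pi (par x) \<noteq> 0" using Suc.hyps depth_par[of x] by simp
  moreover have "A$x$(par x) \<noteq> 0" using A_nz edge_par xr by blast
  ultimately show ?case using pi_par[OF xr] by simp
qed

lemma pi_child: "k \<in> Ch z \<Longrightarrow> pi k = A$z$k * pi z"
  using pi_par[of k] Ch_ne_r Ch_par Asym by metis

definition dl :: "'n \<Rightarrow> 'n \<Rightarrow> nat" where
  "dl x y = (if x = r \<or> y = r \<or> leg x = leg y
     then (if depth x \<le> depth y then depth y - depth x else depth x - depth y)
     else depth x + depth y)"

lemma dl_same: "x = r \<or> y = r \<or> leg x = leg y \<Longrightarrow>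
   dl x y = (if depth x \<le> depth y then depth y - depth x else depth x - depth y)"
  unfolding dl_def by simp

lemma dl_bent: "x \<noteq> r \<Longrightarrow> y \<noteq> r \<Longrightarrow> leg x \<noteq> leg y \<Longrightarrow> dl x y = depth x + depth y"
  unfolding dl_def by simp

definition maxd :: nat where "maxd = Max (range depth)"

lemma depth_le_maxd: "depth y \<le> maxd"
  unfolding maxd_def by (rule Max_ge) auto

end

lemma tri:
  fixes F :: "'a \<Rightarrow> 'a \<Rightarrow> real"
  assumes fin: "finite S" and c3: "card S \<le> 3"
    and sym: "\<forall>a\<in>S. \<forall>b\<in>S. a \<noteq> b \<longrightarrow> F a b = F b a"
    and rs: "\<forall>a\<in>S. (\<Sum>b\<in>S - {a}. F a b) = 0"
    and a: "a \<in> S" and b: "b \<in> S" and ab: "a \<noteq> b"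
  shows "F a b = 0"
proof (cases "S - {a} = {b}")
  case True
  have "(\<Sum>b\<in>S - {a}. F a b) = 0" using rs a by blast
  then show ?thesis using True by simp
next
  case False
  then obtain e where e: "e \<in> S" "e \<noteq> a" "e \<noteq> b" using b ab by blast
  have sub: "{a, b, e} \<subseteq> S" using a b e by auto
  have "card {a, b, e} = 3" using ab e by simp
  then have Seq: "S = {a, b, e}" using card_seteq[OF fin sub] c3 by simp
  have "S - {a} = {b, e}" using Seq ab e by auto
  moreover have "(\<Sum>t\<in>S - {a}. F a t) = 0" using rs a by blast
  ultimately have 1: "F a b + F a e = 0" using e ab by simp
  have "S - {b} = {a, e}" using Seq ab e by auto
  moreover have "(\<Sum>t\<in>S - {b}. F b t) = 0" using rs b by blast
  ultimately have 2: "F b a + F b e = 0" using e ab by simp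
  have "S - {e} = {a, b}" using Seq ab e by auto
  moreover have "(\<Sum>t\<in>S - {e}. F e t) = 0" using rs e by blast
  ultimately have 3: "F e a + F e b = 0" using e ab by simp
  have "F b a = F a b" "F e a = F a e" "F e b = F b e" using sym a b e ab by metis+
  then show ?thesis using 1 2 3 by linarith
qed

context ssp_ctx begin

definition Yv :: "'n \<Rightarrow> 'n \<Rightarrow> real" where "Yv x y = X$x$y * pi x * pi y"
definition Lset :: "nat \<Rightarrow> 'n \<Rightarrow> 'n set" where
  "Lset d a = {z. z \<noteq> r \<and> leg z = a \<and> depth z = d - 1}"
definition Fv :: "nat \<Rightarrow> 'n \<Rightarrow> 'n \<Rightarrow> real" where
  "Fv d a b = (\<Sum>z\<in>Lset d a. Yv z b)"

lemma Yv_sym: "Yv x y = Yv y x"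
  unfolding Yv_def using Xsym'[of x y] by simp

lemma L_cases: "Lset d a = {} \<or> (\<exists>z. Lset d a = {z})"
proof -
  have "\<And>z z'. z \<in> Lset d a \<Longrightarrow> z' \<in> Lset d a \<Longrightarrow> z = z'"
    unfolding Lset_def using inj_leg_depth by auto
  then show ?thesis by blast
qed

lemma adj: "(x = r \<or> leg x = leg y) \<Longrightarrow> depth y = Suc (depth x) \<Longrightarrow> X$x$y = 0"
proof -
  assume h: "x = r \<or> leg x = leg y" and dy: "depth y = Suc (depth x)"
  have yr: "y \<noteq> r" using dy by auto
  have "par y = x"
  proof (cases "x = r")
    case True
    then have "depth (par y) = 0" using dy depth_par by simp
    then show ?thesis using True depth0 by simp
  next
    case False
    then have lx: "leg x = leg y" using h by simp
    have d2: "depth y \<ge> 2" using False depth_ge1 dy by fastforce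
    have "depth (par y) \<ge> 1" using d2 depth_par[of y] by simp
    then have "par y \<noteq> r" by auto
    moreover have "leg (par y) = leg x" using leg_par[OF d2] lx by simp
    moreover have "depth (par y) = depth x" using dy depth_par by simp
    ultimately show ?thesis using inj_leg_depth False by blast
  qed
  then have "E y x" using edge_par yr by blast
  then show ?thesis using X_edge Xsym' by metis
qed

context
  fixes d :: nat
  assumes IH: "\<forall>x y. dl x y < d \<longrightarrow> X$x$y = 0" and d2: "2 \<le> d"
begin

lemma straight:
  "(x = r \<or> leg x = leg y) \<Longrightarrow> depth y = depth x + d \<Longrightarrow> X$x$y = 0"
proof (induction "maxd - depth y" arbitrary: x y rule: less_induct)
  case less
  have dy: "depth y = depth x + d" using less.prems by simp
  have yr: "y \<noteq> r" using dy d2 by auto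
  have dy2: "depth y \<ge> 2" using dy d2 by simp
  define p where "p = anc (d - 1) y"
  have dp: "depth p = Suc (depth x)" unfolding p_def using dy d2 by (simp add: depth_anc)
  have pr: "p \<noteq> r" using dp by auto
  have legp: "leg p = leg y" unfolding p_def using dy d2 by (intro leg_anc) simp
  have ppx: "par p = x"
  proof -
    have pa: "par p = anc d y" unfolding p_def using d2 anc_Suc[of "d - 1" y] by simp
    have da: "depth (anc d y) = depth x" using dy by (simp add: depth_anc)
    show ?thesis
    proof (cases "x = r")
      case True
      then show ?thesis using pa da depth0 by simp
    next
      case False
      have "anc d y \<noteq> r" using da depth_ge1[OF False] by auto
      moreover have "leg (anc d y) = leg y" using dy depth_ge1[OF False] by (intro leg_anc) simp
      ultimately show ?thesis using pa da inj_leg_depth False less.prems(1) by metis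
    qed
  qed
  have z1: "X$p$y = 0"
  proof -
    have "dl p y = d - 1" using dl_same[of p y] legp dp dy d2 by simp
    then show ?thesis using IH d2 by simp
  qed
  have z2: "(\<Sum>k\<in>Ch p. A$p$k * X$k$y) = 0"
  proof (rule sum.neutral, rule ballI)
    fix k assume k: "k \<in> Ch p"
    have "leg k = leg y" using leg_child[OF k pr] legp by simp
    moreover have "depth k = Suc (depth p)" using Ch_depth[OF k] .
    ultimately have "dl k y = d - 2" using dl_same[of k y] dp dy d2 by simp
    then show "A$p$k * X$k$y = 0" using IH d2 by simp
  qed
  have z3: "X$p$(par y) = 0"
  proof -
    have dpy: "depth (par y) = depth y - 1" by (rule depth_par)
    have "leg (par y) = leg y" using leg_par dy2 by simp
    then have "dl p (par y) = d - 2" using dl_same[of p "par y"] legp dp dy dpy d2 by simp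
    then show ?thesis using IH d2 by simp
  qed
  have z4: "(\<Sum>k\<in>Ch y. A$y$k * X$p$k) = 0"
  proof (rule sum.neutral, rule ballI)
    fix k assume k: "k \<in> Ch y"
    have dk: "depth k = Suc (depth y)" using Ch_depth[OF k] .
    have "maxd - depth k < maxd - depth y" using dk depth_le_maxd[of k] by simp
    moreover have "leg k = leg y" using leg_child[OF k yr] .
    moreover have "depth k = depth p + d" using dk dp dy by simp
    ultimately have "X$p$k = 0" using less.hyps[of k p] legp by simp
    then show "A$y$k * X$p$k = 0" by simp
  qed
  have "(\<Sum>k\<in>UNIV. A$p$k * X$k$y) = (\<Sum>k\<in>UNIV. X$p$k * A$k$y)" by (rule comm_entry)
  also have "(\<Sum>k\<in>UNIV. X$p$k * A$k$y) = 0"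
    using nbr_sum'[of "\<lambda>k. X$p$k" y] z1 z3 z4 yr by simp
  finally have "A$p$x * X$x$y = 0"
    using nbr_sum[of p "\<lambda>k. X$k$y"] z1 z2 pr ppx by simp
  moreover have "A$p$x \<noteq> 0" using A_nz edge_par[OF pr] ppx by simp
  ultimately show ?case by simp
qed

lemma slide:
  assumes xr: "x \<noteq> r" and yr: "y \<noteq> r" and lxy: "leg x \<noteq> leg y"
    and dxy: "depth x + depth y = d" and dy2: "depth y \<ge> 2"
  shows "Yv x y = (\<Sum>k\<in>Ch x. Yv k (par y))"
proof -
  define q where "q = par y"
  have dq: "depth q = depth y - 1" unfolding q_def by (rule depth_par)
  have qr: "q \<noteq> r" using dq dy2 by auto
  have legq: "leg q = leg y" unfolding q_def using leg_par dy2 by simp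
  have yq: "y \<in> Ch q" unfolding q_def Ch_def using yr by simp
  have Chq: "Ch q = {y}" using yq Ch_single[OF qr] by blast
  have dx1: "depth x \<ge> 1" using depth_ge1[OF xr] .
  have z1: "X$x$q = 0"
  proof -
    have "dl x q = d - 1" using dl_bent[OF xr qr] lxy legq dq dxy dy2 by simp
    then show ?thesis using IH d2 by simp
  qed
  have z2: "X$(par x)$q = 0"
  proof -
    have "dl (par x) q < d"
    proof (cases "par x = r")
      case True
      then have "depth x = 1" using par[OF xr] by simp
      then show ?thesis using True dl_same[of "par x" q] dq dxy by simp
    next
      case False
      have "depth (par x) \<ge> 1" using depth_ge1[OF False] .
      then have dx2: "depth x \<ge> 2" using depth_par[of x] by simp
      have "leg (par x) = leg x" using leg_par[OF dx2] .
      then have "dl (par x) q = depth (par x) + depth q" using dl_bent[OF False qr] lxy legq by simp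
      then show ?thesis using depth_par[of x] dq dxy dx2 dy2 by simp
    qed
    then show ?thesis using IH by simp
  qed
  have z3: "X$x$(par q) = 0"
  proof -
    have "dl x (par q) < d"
    proof (cases "par q = r")
      case True
      then have "depth q = 1" using par[OF qr] by simp
      then show ?thesis using True dl_same[of x "par q"] dq dxy dx1 by simp
    next
      case False
      have "depth (par q) \<ge> 1" using depth_ge1[OF False] .
      then have dq2: "depth q \<ge> 2" using depth_par[of q] by simp
      have "leg (par q) = leg q" using leg_par[OF dq2] .
      then have "dl x (par q) = depth x + depth (par q)" using dl_bent[OF xr False] lxy legq by simp
      then show ?thesis using depth_par[of q] dq dxy dq2 by simp
    qed
    then show ?thesis using IH by simp
  qed
  have "(\<Sum>k\<in>UNIV. A$x$k * X$k$q) = (\<Sum>k\<in>UNIV. X$x$k * A$k$q)" by (rule comm_entry)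
  then have eq1: "(\<Sum>k\<in>Ch x. A$x$k * X$k$q) = A$q$y * X$x$y"
    using nbr_sum[of x "\<lambda>k. X$k$q"] nbr_sum'[of "\<lambda>k. X$x$k" q] z1 z2 z3 xr qr Chq by simp
  have piy: "pi y = A$q$y * pi q" using pi_par[OF yr] Asym unfolding q_def by metis
  have "Yv x y = (A$q$y * X$x$y) * pi x * pi q" unfolding Yv_def piy by simp
  also have "\<dots> = (\<Sum>k\<in>Ch x. A$x$k * X$k$q) * pi x * pi q" using eq1 by simp
  also have "\<dots> = (\<Sum>k\<in>Ch x. X$k$q * (A$x$k * pi x) * pi q)"
    unfolding sum_distrib_right by (rule sum.cong) (auto simp: mult_ac)
  also have "\<dots> = (\<Sum>k\<in>Ch x. Yv k q)"
    unfolding Yv_def by (rule sum.cong) (auto simp: pi_child)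
  finally show ?thesis unfolding q_def .
qed

lemma special:
  assumes xr: "x \<noteq> r" and dx: "depth x = d - 1"
  shows "(\<Sum>b\<in>Ch r - {leg x}. Yv x b) = 0"
proof -
  have dx1: "depth x \<ge> 1" using depth_ge1[OF xr] .
  have z1: "X$x$r = 0"
  proof -
    have "dl x r = d - 1" using dl_same[of x r] dx dx1 by simp
    then show ?thesis using IH d2 by simp
  qed
  have z2: "X$(par x)$r = 0"
  proof -
    have "dl (par x) r < d" using dl_same[of "par x" r] depth_par[of x] dx d2 by simp
    then show ?thesis using IH by simp
  qed
  have z3: "(\<Sum>k\<in>Ch x. A$x$k * X$k$r) = 0"
  proof (rule sum.neutral, rule ballI)
    fix k assume k: "k \<in> Ch x"
    have "depth k = depth r + d" using Ch_depth[OF k] dx d2 by simp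
    then have "X$r$k = 0" using straight[of r k] by simp
    then show "A$x$k * X$k$r = 0" using Xsym'[of k r] by simp
  qed
  have lx: "leg x \<in> Ch r" using leg_Ch dx1 by simp
  have z4: "X$x$(leg x) = 0"
  proof -
    have "leg (leg x) = leg x" using Ch_r_leg[OF lx] .
    then have "dl x (leg x) < d" using dl_same[of x "leg x"] depth_leg[OF dx1] dx d2 by simp
    then show ?thesis using IH by simp
  qed
  have "(\<Sum>k\<in>UNIV. A$x$k * X$k$r) = (\<Sum>k\<in>UNIV. X$x$k * A$k$r)" by (rule comm_entry)
  then have "(\<Sum>k\<in>Ch r. A$r$k * X$x$k) = 0"
    using nbr_sum[of x "\<lambda>k. X$k$r"] nbr_sum'[of "\<lambda>k. X$x$k" r] z1 z2 z3 xr by simp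
  moreover have "(\<Sum>k\<in>Ch r. A$r$k * X$x$k) = A$r$(leg x) * X$x$(leg x) + (\<Sum>k\<in>Ch r - {leg x}. A$r$k * X$x$k)"
    using lx by (simp add: sum.remove)
  ultimately have s0: "(\<Sum>k\<in>Ch r - {leg x}. A$r$k * X$x$k) = 0" using z4 by simp
  have "(\<Sum>b\<in>Ch r - {leg x}. Yv x b) = (\<Sum>k\<in>Ch r - {leg x}. A$r$k * X$x$k) * pi x"
    unfolding Yv_def sum_distrib_right
    by (rule sum.cong) (auto simp: pi_child pi_r)
  then show ?thesis using s0 by simp
qed

lemma chain:
  "x \<noteq> r \<Longrightarrow> y \<noteq> r \<Longrightarrow> leg x \<noteq> leg y \<Longrightarrow> depth x + depth y = d \<Longrightarrow>
     Yv x y = Fv d (leg x) (leg y)"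
proof (induction "depth y" arbitrary: x y)
  case 0
  then show ?case using depth_pos by fastforce
next
  case (Suc m)
  note xr = Suc.prems(1) and yr = Suc.prems(2) and lxy = Suc.prems(3) and dxy = Suc.prems(4)
  show ?case
  proof (cases "m = 0")
    case True
    then have dy: "depth y = 1" using Suc.hyps(2) by simp
    then have ly: "leg y = y" by (rule leg_depth1)
    have "Lset d (leg x) = {x}"
    proof -
      have "x \<in> Lset d (leg x)" unfolding Lset_def using xr dy dxy by auto
      then show ?thesis using L_cases[of d "leg x"] by auto
    qed
    then show ?thesis unfolding Fv_def using ly by simp
  next
    case False
    then have dy2: "depth y \<ge> 2" using Suc.hyps(2) by simp
    have sl: "Yv x y = (\<Sum>k\<in>Ch x. Yv k (par y))" by (rule slide[OF xr yr lxy dxy dy2])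
    have pyr: "par y \<noteq> r" using depth_par[of y] dy2 by (metis One_nat_def depth_r diff_is_0_eq not_less_eq_eq numeral_2_eq_2 not_numeral_le_zero)
    have lpy: "leg (par y) = leg y" using leg_par[OF dy2] .
    have dpy: "depth (par y) = m" using depth_par[of y] Suc.hyps(2) by simp
    consider "Ch x = {}" | k where "Ch x = {k}" using Ch_cases[OF xr] by blast
    then show ?thesis
    proof cases
      case 1
      have "Lset d (leg x) = {}"
      proof (rule ccontr)
        assume "Lset d (leg x) \<noteq> {}"
        then obtain z where z: "z \<noteq> r" "leg z = leg x" "depth z = d - 1" unfolding Lset_def by auto
        have dx1: "depth x \<ge> 1" using depth_ge1[OF xr] .
        define w where "w = anc (depth z - Suc (depth x)) z"
        have dzx: "depth z \<ge> Suc (depth x)" using z(3) dxy dy2 by simp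
        have dw: "depth w = Suc (depth x)" unfolding w_def using dzx by (simp add: depth_anc)
        have wr: "w \<noteq> r" using dw by auto
        have lw: "leg w = leg x" unfolding w_def using z(2) dx1 dzx by (subst leg_anc) auto
        have pw: "par w = anc (depth z - depth x) z"
          unfolding w_def using dzx anc_Suc[of "depth z - Suc (depth x)" z]
          by (simp add: Suc_diff_Suc)
        have dpw: "depth (par w) = depth x" using dw depth_par[of w] by simp
        have "par w \<noteq> r" using dpw dx1 by auto
        moreover have "leg (par w) = leg x" unfolding pw using z(2) dx1 dzx by (subst leg_anc) auto
        ultimately have "par w = x" using inj_leg_depth xr dpw by blast
        then have "w \<in> Ch x" unfolding Ch_def using wr by simp
        then show False using 1 by simp
      qed
      then show ?thesis using sl 1 unfolding Fv_def by simp
    next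
      case 2
      have k: "k \<in> Ch x" using 2 by simp
      have kr: "k \<noteq> r" using Ch_ne_r[OF k] .
      have lk: "leg k = leg x" using leg_child[OF k xr] .
      have dk: "depth k = Suc (depth x)" using Ch_depth[OF k] .
      have "Yv k (par y) = Fv d (leg k) (leg (par y))"
        using Suc.hyps(1)[of "par y" k] Suc.hyps(2) dpy kr pyr lk lpy lxy dk dxy dy2 by simp
      then show ?thesis using sl 2 lk lpy by simp
    qed
  qed
qed

lemma rowsum: "a \<in> Ch r \<Longrightarrow> (\<Sum>b\<in>Ch r - {a}. Fv d a b) = 0"
proof -
  assume a: "a \<in> Ch r"
  have "(\<Sum>b\<in>Ch r - {a}. Fv d a b) = (\<Sum>z\<in>Lset d a. \<Sum>b\<in>Ch r - {a}. Yv z b)"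
    unfolding Fv_def by (rule sum.swap)
  also have "\<dots> = 0"
  proof (rule sum.neutral, rule ballI)
    fix z assume "z \<in> Lset d a"
    then have z: "z \<noteq> r" "leg z = a" "depth z = d - 1" unfolding Lset_def by auto
    show "(\<Sum>b\<in>Ch r - {a}. Yv z b) = 0" using special[OF z(1) z(3)] z(2) by simp
  qed
  finally show ?thesis .
qed

lemma Fsym_aux: "a \<in> Ch r \<Longrightarrow> b \<in> Ch r \<Longrightarrow> a \<noteq> b \<Longrightarrow> Lset d a \<noteq> {} \<Longrightarrow> Fv d a b = Fv d b a"
proof -
  assume a: "a \<in> Ch r" and b: "b \<in> Ch r" and ab: "a \<noteq> b" and L: "Lset d a \<noteq> {}"
  obtain z where Lz: "Lset d a = {z}" using L L_cases by blast
  then have z: "z \<noteq> r" "leg z = a" "depth z = d - 1" unfolding Lset_def by auto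
  have "Fv d a b = Yv z b" unfolding Fv_def Lz by simp
  also have "\<dots> = Yv b z" by (rule Yv_sym)
  also have "\<dots> = Fv d (leg b) (leg z)"
    using chain[of b z] Ch_ne_r[OF b] z Ch_r_leg[OF b] Ch_r_depth[OF b] ab d2 by simp
  finally show ?thesis using Ch_r_leg[OF b] z by simp
qed

lemma Fsym: "a \<in> Ch r \<Longrightarrow> b \<in> Ch r \<Longrightarrow> a \<noteq> b \<Longrightarrow> Fv d a b = Fv d b a"
proof -
  assume a: "a \<in> Ch r" and b: "b \<in> Ch r" and ab: "a \<noteq> b"
  show ?thesis
  proof (cases "Lset d a = {}")
    case False then show ?thesis using Fsym_aux a b ab by blast
  next
    case La: True
    show ?thesis
    proof (cases "Lset d b = {}")
      case False then show ?thesis using Fsym_aux a b ab by metis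
    next
      case True then show ?thesis using La unfolding Fv_def by simp
    qed
  qed
qed

lemma bent:
  assumes xr: "x \<noteq> r" and yr: "y \<noteq> r" and lxy: "leg x \<noteq> leg y" and dxy: "depth x + depth y = d"
  shows "X$x$y = 0"
proof -
  have lx: "leg x \<in> Ch r" "leg y \<in> Ch r" using leg_Ch depth_ge1 xr yr by auto
  have "Fv d (leg x) (leg y) = 0"
    by (rule tri[of "Ch r"]) (use lx lxy card_Ch_r Fsym rowsum in auto)
  then have "Yv x y = 0" using chain[OF xr yr lxy dxy] by simp
  then show ?thesis unfolding Yv_def using pi_nz by simp
qed

end

lemma level: "\<forall>x y. dl x y = d \<longrightarrow> X$x$y = 0"
proof (induction d rule: less_induct)
  case (less d)
  have IH: "\<forall>x y. dl x y < d \<longrightarrow> X$x$y = 0" using less by blast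
  show ?case
  proof (intro allI impI)
    fix x y assume dxy: "dl x y = d"
    show "X$x$y = 0"
    proof (cases "x = r \<or> y = r \<or> leg x = leg y")
      case same: True
      then have dl: "dl x y = (if depth x \<le> depth y then depth y - depth x else depth x - depth y)"
        by (rule dl_same)
      consider "d = 0" | "d = 1" | "d \<ge> 2" by arith
      then show ?thesis
      proof cases
        case 1
        then have de: "depth x = depth y" using dl dxy by (auto split: if_splits)
        show ?thesis
        proof (cases "x = r \<or> y = r")
          case True
          then have "x = y" using de depth0 by (metis depth_r)
          then show ?thesis using Xd by simp
        next
          case False
          then have "x = y" using inj_leg_depth de same by blast
          then show ?thesis using Xd by simp
        qed
      next
        case 2
        show ?thesis
        proof (cases "depth x \<le> depth y")
          case True
          then have dy: "depth y = Suc (depth x)" using dl dxy 2 by simp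
          then have "y \<noteq> r" by auto
          then have "x = r \<or> leg x = leg y" using same by blast
          then show ?thesis using adj dy by blast
        next
          case False
          then have dy: "depth x = Suc (depth y)" using dl dxy 2 by simp
          then have "x \<noteq> r" by auto
          then have "y = r \<or> leg y = leg x" using same by metis
          then have "X$y$x = 0" using adj dy by blast
          then show ?thesis using Xsym' by metis
        qed
      next
        case 3
        show ?thesis
        proof (cases "depth x \<le> depth y")
          case True
          then have dy: "depth y = depth x + d" using dl dxy by simp
          then have "y \<noteq> r" using 3 by auto
          then have "x = r \<or> leg x = leg y" using same by blast
          then show ?thesis using straight[OF IH 3] dy by blast
        next
          case False
          then have dy: "depth x = depth y + d" using dl dxy by simp
          then have "x \<noteq> r" using 3 by auto
          then have "y = r \<or> leg y = leg x" using same by metis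
          then have "X$y$x = 0" using straight[OF IH 3] dy by blast
          then show ?thesis using Xsym' by metis
        qed
      qed
    next
      case False
      then have xr: "x \<noteq> r" and yr: "y \<noteq> r" and lxy: "leg x \<noteq> leg y" by auto
      have dsum: "depth x + depth y = d" using dl_bent[OF xr yr lxy] dxy by simp
      have "d \<ge> 2" using dsum depth_ge1[OF xr] depth_ge1[OF yr] by simp
      then show ?thesis using bent[OF IH _ xr yr lxy dsum] by blast
    qed
  qed
qed

theorem X_zero: "X = 0"
  using level by (simp add: vec_eq_iff)

end

lemma not_ssp_vectors:
  fixes A :: "real^'n^'n" and x y :: "'n \<Rightarrow> real"
  assumes symA: "\<forall>i j. A$i$j = A$j$i"
    and ax: "\<forall>i. (\<Sum>k\<in>UNIV. A$i$k * x k) = 0"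
    and ay: "\<forall>i. (\<Sum>k\<in>UNIV. A$i$k * y k) = 0"
    and disj: "\<forall>i. x i * y i = 0"
    and sep: "\<forall>i j. i \<noteq> j \<longrightarrow> A$i$j \<noteq> 0 \<longrightarrow> x i * y j = 0"
    and nz: "x i0 * y j0 + y i0 * x j0 \<noteq> 0"
  shows "\<not> SSP A"
proof
  assume ssp: "SSP A"
  define X :: "real^'n^'n" where "X = (\<chi> i j. x i * y j + y i * x j)"
  have Xe: "X$i$j = x i * y j + y i * x j" for i j unfolding X_def by simp
  have sX: "symmetric_mat X"
    unfolding symmetric_mat_def by (simp add: vec_eq_iff transpose_def Xe mult.commute add.commute)
  have h1: "\<forall>i j. A$i$j * X$i$j = 0"
  proof (intro allI)
    fix i j
    show "A$i$j * X$i$j = 0"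
    proof (cases "i = j")
      case True then show ?thesis using disj by (simp add: Xe mult.commute)
    next
      case False
      show ?thesis
      proof (cases "A$i$j = 0")
        case True then show ?thesis by simp
      next
        case nz': False
        have "x i * y j = 0" using sep False nz' by blast
        moreover have "x j * y i = 0" using sep False nz' symA by metis
        ultimately have "x i * y j + x j * y i = 0" by linarith
        then have "X$i$j = 0" by (simp add: Xe mult.commute)
        then show ?thesis by simp
      qed
    qed
  qed
  have h2: "\<forall>i. X$i$i = 0" using disj by (simp add: Xe mult.commute)
  have h3: "A ** X - X ** A = 0"
  proof -
    have "(A ** X)$i$j = 0" for i j
    proof -
      have "(A ** X)$i$j = (\<Sum>k\<in>UNIV. A$i$k * x k * y j + A$i$k * y k * x j)"
        by (simp add: matrix_matrix_mult_def Xe algebra_simps)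
      also have "\<dots> = (\<Sum>k\<in>UNIV. A$i$k * x k) * y j + (\<Sum>k\<in>UNIV. A$i$k * y k) * x j"
        by (simp add: sum.distrib sum_distrib_right)
      finally show ?thesis using ax ay by simp
    qed
    moreover have "(X ** A)$i$j = 0" for i j
    proof -
      have "(X ** A)$i$j = (\<Sum>k\<in>UNIV. x i * (A$j$k * y k) + y i * (A$j$k * x k))"
        by (simp add: matrix_matrix_mult_def Xe algebra_simps symA[rule_format, of _ j])
      also have "\<dots> = x i * (\<Sum>k\<in>UNIV. A$j$k * y k) + y i * (\<Sum>k\<in>UNIV. A$j$k * x k)"
        by (simp add: sum.distrib sum_distrib_left)
      finally show ?thesis using ax ay by simp
    qed
    ultimately show ?thesis by (simp add: vec_eq_iff)
  qed
  have "X = 0" using ssp sX h1 h2 h3 unfolding SSP_def by blast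
  then have "X$i0$j0 = 0" by simp
  then show False using nz Xe by simp
qed

lemma card_pick: "finite S \<Longrightarrow> card S \<ge> Suc n \<Longrightarrow> \<exists>a\<in>S. card (S - {a}) \<ge> n"
proof -
  assume f: "finite S" and c: "card S \<ge> Suc n"
  then have "S \<noteq> {}" by auto
  then obtain a where "a \<in> S" by blast
  then show ?thesis using c f by (intro bexI[of _ a]) (auto simp: card_Diff_singleton)
qed

context rtree begin

definition Dd :: "'n \<Rightarrow> 'n set" where "Dd b = {z. \<exists>k. anc k z = b}"

lemma Dd_self: "b \<in> Dd b" unfolding Dd_def by (auto intro: exI[of _ 0])

lemma r_notin_Dd: "b \<noteq> r \<Longrightarrow> r \<notin> Dd b"
  unfolding Dd_def using anc_r by auto

lemma Dd_anc: "b \<noteq> r \<Longrightarrow> z \<in> Dd b \<Longrightarrow> depth b \<le> depth z \<and> anc (depth z - depth b) z = b"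
proof -
  assume br: "b \<noteq> r" and z: "z \<in> Dd b"
  then obtain k where k: "anc k z = b" unfolding Dd_def by auto
  have db: "depth b = depth z - k" using k depth_anc by metis
  have "depth b \<ge> 1" using depth_ge1[OF br] .
  then have "depth z - depth b = k" using db by simp
  then show ?thesis using db k by simp
qed

lemma Dd_depth: "b \<noteq> r \<Longrightarrow> z \<in> Dd b \<Longrightarrow> depth b \<le> depth z"
  using Dd_anc by blast

lemma Dd_up: "z \<in> Dd b \<Longrightarrow> z \<noteq> b \<Longrightarrow> par z \<in> Dd b"
proof -
  assume z: "z \<in> Dd b" and ne: "z \<noteq> b"
  then obtain k where k: "anc k z = b" unfolding Dd_def by auto
  then obtain j where j: "k = Suc j" using ne by (cases k) auto
  then have "anc j (par z) = b" using k anc_Suc' by metis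
  then show ?thesis unfolding Dd_def by blast
qed

lemma Dd_down: "z \<in> Dd b \<Longrightarrow> w \<in> Ch z \<Longrightarrow> w \<in> Dd b"
proof -
  assume z: "z \<in> Dd b" and w: "w \<in> Ch z"
  then obtain k where k: "anc k z = b" unfolding Dd_def by auto
  have "anc (Suc k) w = b" using k anc_Suc' Ch_par[OF w] by metis
  then show ?thesis unfolding Dd_def by blast
qed

lemma Dd_eq_depth: "b \<noteq> r \<Longrightarrow> z \<in> Dd b \<Longrightarrow> depth z = depth b \<Longrightarrow> z = b"
  using Dd_anc by fastforce

lemma Dd_disj: "b \<noteq> r \<Longrightarrow> b' \<noteq> r \<Longrightarrow> b \<noteq> b' \<Longrightarrow> depth b = depth b' \<Longrightarrow> Dd b \<inter> Dd b' = {}"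
proof -
  assume br: "b \<noteq> r" and br': "b' \<noteq> r" and ne: "b \<noteq> b'" and d: "depth b = depth b'"
  show ?thesis
  proof (rule ccontr)
    assume "Dd b \<inter> Dd b' \<noteq> {}"
    then obtain z where z: "z \<in> Dd b" "z \<in> Dd b'" by blast
    have "anc (depth z - depth b) z = b" using Dd_anc[OF br z(1)] by simp
    moreover have "anc (depth z - depth b) z = b'" using Dd_anc[OF br' z(2)] d by simp
    ultimately show False using ne by simp
  qed
qed

lemma Dd_sub: "anc k z = a \<Longrightarrow> anc k' z = c \<Longrightarrow> k' \<le> k \<Longrightarrow> c \<in> Dd a"
proof -
  assume "anc k z = a" "anc k' z = c" "k' \<le> k"
  then have "anc (k - k') c = a" using anc_add[of "k - k'" k' z] by simp
  then show ?thesis unfolding Dd_def by blast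
qed

lemma Dd_noedge:
  assumes br: "b \<noteq> r" and br': "b' \<noteq> r" and dj: "Dd b \<inter> Dd b' = {}"
    and p1: "par b \<notin> Dd b'" and p2: "par b' \<notin> Dd b"
    and z: "z \<in> Dd b" and z': "z' \<in> Dd b'"
  shows "\<not> E z z'"
proof
  assume e: "E z z'"
  from tree_edge[OF e] show False
  proof
    assume h: "z \<noteq> r \<and> z' = par z"
    show False
    proof (cases "z = b")
      case True then show ?thesis using h p1 z' by simp
    next
      case False then have "par z \<in> Dd b" using Dd_up z by blast
      then show ?thesis using h z' dj by auto
    qed
  next
    assume h: "z' \<noteq> r \<and> z = par z'"
    show False
    proof (cases "z' = b'")
      case True then show ?thesis using h p2 z by simp
    next
      case False then have "par z' \<in> Dd b'" using Dd_up z' by blast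
      then show ?thesis using h z dj by auto
    qed
  qed
qed

lemma Dd_nbr: "b \<in> Ch v \<Longrightarrow> z \<in> Dd b \<Longrightarrow> E z k \<Longrightarrow> k = v \<or> k \<in> Dd b"
proof -
  assume b: "b \<in> Ch v" and z: "z \<in> Dd b" and e: "E z k"
  from tree_edge[OF e] show ?thesis
  proof
    assume h: "z \<noteq> r \<and> k = par z"
    show ?thesis
    proof (cases "z = b")
      case True then show ?thesis using h Ch_par[OF b] by simp
    next
      case False then show ?thesis using h Dd_up z by blast
    qed
  next
    assume h: "k \<noteq> r \<and> z = par k"
    then have "k \<in> Ch z" unfolding Ch_def by simp
    then show ?thesis using Dd_down z by blast
  qed
qed

lemma v_notin_Dd: "b \<in> Ch v \<Longrightarrow> v \<notin> Dd b"
  using Dd_depth Ch_depth Ch_ne_r by fastforce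

definition sv :: "'n \<Rightarrow> 'n \<Rightarrow> 'n \<Rightarrow> real" where
  "sv b1 b2 k = (if k \<in> Dd b1 then 1 else if k \<in> Dd b2 then -1 else 0)"

definition Am :: "('n \<Rightarrow> real) \<Rightarrow> real^'n^'n" where
  "Am Dg = (\<chi> i j. if i = j then Dg i else if E i j then 1 else 0)"

lemma Am_sum: "(\<Sum>k\<in>UNIV. Am Dg $ i $ k * f k) = Dg i * f i + (\<Sum>k\<in>{k. E i k}. f k)"
proof -
  have "(\<Sum>k\<in>UNIV. Am Dg $ i $ k * f k) =
      (\<Sum>k\<in>UNIV. (if k = i then Dg i * f i else 0) + (if E i k then f k else 0))"
    by (rule sum.cong) (auto simp: Am_def irrE)
  also have "\<dots> = Dg i * f i + (\<Sum>k\<in>UNIV. if E i k then f k else 0)"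
    by (simp add: sum.distrib)
  also have "(\<Sum>k\<in>UNIV. if E i k then f k else 0) = (\<Sum>k\<in>{k. E i k}. f k)"
    by (simp add: sum.If_cases)
  finally show ?thesis .
qed

lemma eig:
  assumes b1: "b1 \<in> Ch v" and b2: "b2 \<in> Ch v" and ne: "b1 \<noteq> b2"
    and Dg: "\<forall>z \<in> Dd b1 \<union> Dd b2. Dg z = - real (card {k. E z k \<and> k \<noteq> v})"
  shows "(\<Sum>k\<in>UNIV. Am Dg $ i $ k * sv b1 b2 k) = 0"
proof -
  have b1r: "b1 \<noteq> r" and b2r: "b2 \<noteq> r" using b1 b2 Ch_ne_r by auto
  have dj: "Dd b1 \<inter> Dd b2 = {}"
    using Dd_disj[OF b1r b2r ne] Ch_depth[OF b1] Ch_depth[OF b2] by simp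
  have vn: "v \<notin> Dd b1" "v \<notin> Dd b2" using v_notin_Dd b1 b2 by auto
  have S: "(\<Sum>k\<in>UNIV. Am Dg $ i $ k * sv b1 b2 k) = Dg i * sv b1 b2 i + (\<Sum>k\<in>{k. E i k}. sv b1 b2 k)"
    by (rule Am_sum)
  have cnt: "(\<Sum>k\<in>{k. E i k}. (if k = v then 0 else 1::real)) = real (card {k. E i k \<and> k \<noteq> v})"
  proof -
    have "(\<Sum>k\<in>{k. E i k}. (if k = v then 0 else 1::real)) = (\<Sum>k\<in>{k. E i k} \<inter> {k. k \<noteq> v}. 1)"
      by (simp add: sum.If_cases Int_def)
    also have "{k. E i k} \<inter> {k. k \<noteq> v} = {k. E i k \<and> k \<noteq> v}" by auto
    finally show ?thesis by simp
  qed
  consider "i \<in> Dd b1" | "i \<in> Dd b2" | "i = v" | "i \<notin> Dd b1" "i \<notin> Dd b2" "i \<noteq> v" by blast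
  then show ?thesis
  proof cases
    case 1
    have "(\<Sum>k\<in>{k. E i k}. sv b1 b2 k) = (\<Sum>k\<in>{k. E i k}. (if k = v then 0 else 1::real))"
    proof (rule sum.cong)
      fix k assume "k \<in> {k. E i k}"
      then have "k = v \<or> k \<in> Dd b1" using Dd_nbr[OF b1 1] by simp
      then show "sv b1 b2 k = (if k = v then 0 else 1)" unfolding sv_def using vn by auto
    qed simp
    then show ?thesis using S cnt Dg 1 unfolding sv_def by simp
  next
    case 2
    then have i1: "i \<notin> Dd b1" using dj by auto
    have "(\<Sum>k\<in>{k. E i k}. sv b1 b2 k) = - (\<Sum>k\<in>{k. E i k}. (if k = v then 0 else 1::real))"
      unfolding sum_negf[symmetric]
    proof (rule sum.cong)
      fix k assume "k \<in> {k. E i k}"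
      then have "k = v \<or> k \<in> Dd b2" using Dd_nbr[OF b2 2] by simp
      then show "sv b1 b2 k = - (if k = v then 0 else 1)" unfolding sv_def using vn dj by auto
    qed simp
    then show ?thesis using S cnt Dg 2 i1 unfolding sv_def by simp
  next
    case 3
    have svi: "sv b1 b2 i = 0" unfolding sv_def using vn 3 by simp
    have "(\<Sum>k\<in>{k. E i k}. sv b1 b2 k) = (\<Sum>k\<in>{k. E i k}. (if k = b1 then 1 else 0) - (if k = b2 then 1 else 0))"
    proof (rule sum.cong)
      fix k assume "k \<in> {k. E i k}"
      then have e: "E v k" using 3 by simp
      have "k \<in> Dd b1 \<Longrightarrow> k = b1"
      proof -
        assume k1: "k \<in> Dd b1"
        from tree_edge[OF e] show "k = b1"
        proof
          assume h: "v \<noteq> r \<and> k = par v"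
          then have "v \<in> Ch k" unfolding Ch_def by simp
          then have "v \<in> Dd b1" using Dd_down k1 by blast
          then show ?thesis using vn by simp
        next
          assume h: "k \<noteq> r \<and> v = par k"
          then have "depth k = depth b1" using par[of k] Ch_depth[OF b1] by simp
          then show ?thesis using Dd_eq_depth[OF b1r k1] by simp
        qed
      qed
      moreover have "k \<in> Dd b2 \<Longrightarrow> k = b2"
      proof -
        assume k1: "k \<in> Dd b2"
        from tree_edge[OF e] show "k = b2"
        proof
          assume h: "v \<noteq> r \<and> k = par v"
          then have "v \<in> Ch k" unfolding Ch_def by simp
          then have "v \<in> Dd b2" using Dd_down k1 by blast
          then show ?thesis using vn by simp
        next
          assume h: "k \<noteq> r \<and> v = par k"
          then have "depth k = depth b2" using par[of k] Ch_depth[OF b2] by simp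
          then show ?thesis using Dd_eq_depth[OF b2r k1] by simp
        qed
      qed
      ultimately show "sv b1 b2 k = (if k = b1 then 1 else 0) - (if k = b2 then 1 else 0)"
        unfolding sv_def using ne Dd_self[of b1] Dd_self[of b2] dj by auto
    qed simp
    also have "\<dots> = 0"
    proof -
      have "E v b1" using edge_par[OF b1r] Ch_par[OF b1] symE by metis
      moreover have "E v b2" using edge_par[OF b2r] Ch_par[OF b2] symE by metis
      ultimately have e1: "E i b1" "E i b2" using 3 by auto
      have "(\<Sum>k\<in>{k. E i k}. (if k = b1 then 1 else 0) - (if k = b2 then 1 else (0::real))) =
         (\<Sum>k\<in>{k. E i k}. (if k = b1 then 1 else 0)) - (\<Sum>k\<in>{k. E i k}. (if k = b2 then 1 else (0::real)))"
        by (rule sum_subtractf)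
      also have "\<dots> = 0" using e1 by simp
      finally show ?thesis .
    qed
    finally show ?thesis using S svi by simp
  next
    case 4
    have svi: "sv b1 b2 i = 0" unfolding sv_def using 4 by simp
    have "(\<Sum>k\<in>{k. E i k}. sv b1 b2 k) = 0"
    proof (rule sum.neutral, rule ballI)
      fix k assume "k \<in> {k. E i k}"
      then have e: "E k i" using symE by simp
      have "k \<notin> Dd b1" using Dd_nbr[OF b1 _ e] 4 by blast
      moreover have "k \<notin> Dd b2" using Dd_nbr[OF b2 _ e] 4 by blast
      ultimately show "sv b1 b2 k = 0" unfolding sv_def by simp
    qed
    then show ?thesis using S svi by simp
  qed
qed

lemma build:
  assumes b1: "b1 \<in> Ch v" and b2: "b2 \<in> Ch v" and ne: "b1 \<noteq> b2"
    and c1: "c1 \<in> Ch w" and c2: "c2 \<in> Ch w" and ne': "c1 \<noteq> c2"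
    and dj: "(Dd b1 \<union> Dd b2) \<inter> (Dd c1 \<union> Dd c2) = {}"
    and noe: "\<forall>z\<in>Dd b1 \<union> Dd b2. \<forall>z'\<in>Dd c1 \<union> Dd c2. \<not> E z z'"
  shows "\<not> in_G_SSP E"
proof
  assume G: "in_G_SSP E"
  define S1 where "S1 = Dd b1 \<union> Dd b2"
  define S2 where "S2 = Dd c1 \<union> Dd c2"
  define Dg where "Dg z = (if z \<in> S1 then - real (card {k. E z k \<and> k \<noteq> v})
      else if z \<in> S2 then - real (card {k. E z k \<and> k \<noteq> w}) else 0)" for z
  let ?A = "Am Dg"
  have AS: "?A \<in> S_graph E"
    unfolding S_graph_def symmetric_mat_def
    by (auto simp: vec_eq_iff transpose_def Am_def symE)
  have symA: "\<forall>i j. ?A$i$j = ?A$j$i" by (auto simp: Am_def symE)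
  have "\<forall>z\<in>Dd b1 \<union> Dd b2. Dg z = - real (card {k. E z k \<and> k \<noteq> v})"
    unfolding Dg_def S1_def by auto
  then have ax: "\<forall>i. (\<Sum>k\<in>UNIV. ?A$i$k * sv b1 b2 k) = 0"
    using eig[OF b1 b2 ne] by blast
  have "\<forall>z\<in>Dd c1 \<union> Dd c2. Dg z = - real (card {k. E z k \<and> k \<noteq> w})"
    unfolding Dg_def S1_def S2_def using dj by auto
  then have ay: "\<forall>i. (\<Sum>k\<in>UNIV. ?A$i$k * sv c1 c2 k) = 0"
    using eig[OF c1 c2 ne'] by blast
  have x_supp: "sv b1 b2 i \<noteq> 0 \<Longrightarrow> i \<in> S1" for i unfolding sv_def S1_def by (auto split: if_splits)
  have y_supp: "sv c1 c2 i \<noteq> 0 \<Longrightarrow> i \<in> S2" for i unfolding sv_def S2_def by (auto split: if_splits)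
  have disj: "\<forall>i. sv b1 b2 i * sv c1 c2 i = 0"
    using x_supp y_supp dj unfolding S1_def S2_def by (metis disjoint_iff mult_eq_0_iff)
  have sep: "\<forall>i j. i \<noteq> j \<longrightarrow> ?A$i$j \<noteq> 0 \<longrightarrow> sv b1 b2 i * sv c1 c2 j = 0"
  proof (intro allI impI)
    fix i j assume ij: "i \<noteq> j" and a: "?A$i$j \<noteq> 0"
    then have e: "E i j" by (auto simp: Am_def split: if_splits)
    show "sv b1 b2 i * sv c1 c2 j = 0"
      using x_supp[of i] y_supp[of j] noe e unfolding S1_def S2_def by auto
  qed
  have b1S: "b1 \<in> S1" unfolding S1_def using Dd_self by auto
  have c1S: "c1 \<in> S2" unfolding S2_def using Dd_self by auto
  have "sv b1 b2 b1 = 1" unfolding sv_def using Dd_self by simp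
  moreover have "sv c1 c2 c1 = 1" unfolding sv_def using Dd_self by simp
  moreover have "sv c1 c2 b1 = 0" using y_supp[of b1] b1S dj unfolding S1_def S2_def by auto
  moreover have "sv b1 b2 c1 = 0" using x_supp[of c1] c1S dj unfolding S1_def S2_def by auto
  ultimately have nz: "sv b1 b2 b1 * sv c1 c2 c1 + sv c1 c2 b1 * sv b1 b2 c1 \<noteq> 0" by simp
  have "\<not> SSP ?A" by (rule not_ssp_vectors[OF symA ax ay disj sep nz])
  then show False using G AS unfolding in_G_SSP_def by blast
qed

end

context rtree begin

lemma Dd_child_disj:
  assumes a: "a \<in> Ch v" and b: "b \<in> Ch v" and ab: "a \<noteq> b"
  shows "Dd a \<inter> Dd b = {}"
  using Dd_disj[OF Ch_ne_r[OF a] Ch_ne_r[OF b] ab] Ch_depth[OF a] Ch_depth[OF b] by simp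

lemma Dd_child_noedge:
  assumes a: "a \<in> Ch v" and b: "b \<in> Ch v" and ab: "a \<noteq> b"
  shows "\<forall>z\<in>Dd a. \<forall>z'\<in>Dd b. \<not> E z z'"
proof (intro ballI)
  fix z z' assume z: "z \<in> Dd a" and z': "z' \<in> Dd b"
  have "par a \<notin> Dd b" using Ch_par[OF a] v_notin_Dd[OF b] by simp
  moreover have "par b \<notin> Dd a" using Ch_par[OF b] v_notin_Dd[OF a] by simp
  ultimately show "\<not> E z z'"
    using Dd_noedge[OF Ch_ne_r[OF a] Ch_ne_r[OF b] Dd_child_disj[OF a b ab] _ _ z z'] by blast
qed

lemma deg4_core:
  assumes a: "a \<in> Ch v" and b: "b \<in> Ch v" and c: "c \<in> Ch v" and e: "e \<in> Ch v"
    and d: "distinct [a, b, c, e]"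
  shows "\<not> in_G_SSP E"
proof (rule build[OF a b _ c e])
  show "a \<noteq> b" "c \<noteq> e" using d by auto
  show "(Dd a \<union> Dd b) \<inter> (Dd c \<union> Dd e) = {}"
    using Dd_child_disj a b c e d by (simp; blast)
  show "\<forall>z\<in>Dd a \<union> Dd b. \<forall>z'\<in>Dd c \<union> Dd e. \<not> E z z'"
    using Dd_child_noedge[OF a c] Dd_child_noedge[OF a e] Dd_child_noedge[OF b c]
      Dd_child_noedge[OF b e] d by auto
qed

lemma two3_pair:
  assumes a: "a \<in> Ch r" and wr: "w \<noteq> r" and wa: "w \<notin> Dd a" and c: "c \<in> Ch w"
  shows "Dd a \<inter> Dd c = {} \<and> (\<forall>z\<in>Dd a. \<forall>z'\<in>Dd c. \<not> E z z')"
proof -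
  have ar: "a \<noteq> r" and cr: "c \<noteq> r" using Ch_ne_r a c by auto
  have da: "depth a = 1" using Ch_r_depth[OF a] .
  have dc: "depth c = Suc (depth w)" using Ch_depth[OF c] .
  have dw: "depth w \<ge> 1" using depth_ge1[OF wr] .
  have dj: "Dd a \<inter> Dd c = {}"
  proof (rule ccontr)
    assume "Dd a \<inter> Dd c \<noteq> {}"
    then obtain z where z: "z \<in> Dd a" "z \<in> Dd c" by blast
    have 1: "anc (depth z - depth a) z = a" "anc (depth z - depth c) z = c"
      using Dd_anc[OF ar z(1)] Dd_anc[OF cr z(2)] by auto
    have "depth z - depth c \<le> depth z - depth a" using da dc by simp
    then have "c \<in> Dd a" using Dd_sub[OF 1] by simp
    moreover have "c \<noteq> a" using da dc dw by auto
    ultimately have "par c \<in> Dd a" using Dd_up by blast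
    then show False using Ch_par[OF c] wa by simp
  qed
  moreover have "\<forall>z\<in>Dd a. \<forall>z'\<in>Dd c. \<not> E z z'"
  proof (intro ballI)
    fix z z' assume z: "z \<in> Dd a" and z': "z' \<in> Dd c"
    have "par a \<notin> Dd c" using Ch_par[OF a] r_notin_Dd[OF cr] by simp
    moreover have "par c \<notin> Dd a" using Ch_par[OF c] wa by simp
    ultimately show "\<not> E z z'" using Dd_noedge[OF ar cr dj _ _ z z'] by blast
  qed
  ultimately show ?thesis by blast
qed

lemma two3_core:
  assumes a: "a \<in> Ch r" and a': "a' \<in> Ch r" and aa: "a \<noteq> a'" and wr: "w \<noteq> r"
    and wa: "w \<notin> Dd a" and wa': "w \<notin> Dd a'"
    and c1: "c1 \<in> Ch w" and c2: "c2 \<in> Ch w" and cc: "c1 \<noteq> c2"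
  shows "\<not> in_G_SSP E"
proof (rule build[OF a a' aa c1 c2 cc])
  have p1: "Dd a \<inter> Dd c1 = {} \<and> (\<forall>z\<in>Dd a. \<forall>z'\<in>Dd c1. \<not> E z z')" by (rule two3_pair[OF a wr wa c1])
  have p2: "Dd a \<inter> Dd c2 = {} \<and> (\<forall>z\<in>Dd a. \<forall>z'\<in>Dd c2. \<not> E z z')" by (rule two3_pair[OF a wr wa c2])
  have p3: "Dd a' \<inter> Dd c1 = {} \<and> (\<forall>z\<in>Dd a'. \<forall>z'\<in>Dd c1. \<not> E z z')" by (rule two3_pair[OF a' wr wa' c1])
  have p4: "Dd a' \<inter> Dd c2 = {} \<and> (\<forall>z\<in>Dd a'. \<forall>z'\<in>Dd c2. \<not> E z z')" by (rule two3_pair[OF a' wr wa' c2])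
  show "(Dd a \<union> Dd a') \<inter> (Dd c1 \<union> Dd c2) = {}" using p1 p2 p3 p4 by blast
  show "\<forall>z\<in>Dd a \<union> Dd a'. \<forall>z'\<in>Dd c1 \<union> Dd c2. \<not> E z z'" using p1 p2 p3 p4 by blast
qed

end

lemma pick4:
  assumes f: "finite S" and c: "card S \<ge> 4"
  shows "\<exists>a b c e. a \<in> S \<and> b \<in> S \<and> c \<in> S \<and> e \<in> S \<and> distinct [a, b, c, e]"
proof -
  obtain a where a: "a \<in> S" "card (S - {a}) \<ge> 3" using card_pick[OF f, of 3] c by auto
  obtain b where b: "b \<in> S - {a}" "card (S - {a} - {b}) \<ge> 2" using card_pick[of "S - {a}" 2] f a by auto
  obtain c where c: "c \<in> S - {a} - {b}" "card (S - {a} - {b} - {c}) \<ge> 1"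
    using card_pick[of "S - {a} - {b}" 1] f b by auto
  obtain e where e: "e \<in> S - {a} - {b} - {c}" "card (S - {a} - {b} - {c} - {e}) \<ge> 0"
    using card_pick[of "S - {a} - {b} - {c}" 0] f c by auto
  show ?thesis using a b c e by (intro exI[of _ a] exI[of _ b] exI[of _ c] exI[of _ e]) auto
qed

lemma pick3:
  assumes f: "finite S" and c: "card S \<ge> 3"
  shows "\<exists>a b c. a \<in> S \<and> b \<in> S \<and> c \<in> S \<and> distinct [a, b, c]"
proof -
  obtain a where a: "a \<in> S" "card (S - {a}) \<ge> 2" using card_pick[OF f, of 2] c by auto
  obtain b where b: "b \<in> S - {a}" "card (S - {a} - {b}) \<ge> 1" using card_pick[of "S - {a}" 1] f a by auto
  obtain c where c: "c \<in> S - {a} - {b}" "card (S - {a} - {b} - {c}) \<ge> 0"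
    using card_pick[of "S - {a} - {b}" 0] f b by auto
  show ?thesis using a b c by (intro exI[of _ a] exI[of _ b] exI[of _ c]) auto
qed

lemma deg4_not:
  fixes E :: "'n::finite \<Rightarrow> 'n \<Rightarrow> bool"
  assumes T: "is_tree E" and d: "degree E v \<ge> 4"
  shows "\<not> in_G_SSP E"
proof -
  interpret rtree E v using T by unfold_locales
  have "card (Ch v) \<ge> 4" using d Ch_r_nbrs unfolding degree_def by simp
  then obtain a b c e where "a \<in> Ch v" "b \<in> Ch v" "c \<in> Ch v" "e \<in> Ch v" "distinct [a, b, c, e]"
    using pick4[of "Ch v"] by auto
  then show ?thesis using deg4_core by blast
qed

lemma two3_not:
  fixes E :: "'n::finite \<Rightarrow> 'n \<Rightarrow> bool"
  assumes T: "is_tree E" and uw: "u \<noteq> w" and du: "degree E u = 3" and dw: "degree E w = 3"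
  shows "\<not> in_G_SSP E"
proof -
  interpret rtree E u using T by unfold_locales
  have "card (Ch u) \<ge> 3" using du Ch_r_nbrs unfolding degree_def by simp
  then obtain a1 a2 a3 where a: "a1 \<in> Ch u" "a2 \<in> Ch u" "a3 \<in> Ch u" and ad: "distinct [a1, a2, a3]"
    using pick3[of "Ch u"] by auto
  have wr: "w \<noteq> u" using uw by simp
  have "{k. E w k} = insert (par w) (Ch w)" using nbrs_eq[of w] wr by simp
  then have "card (insert (par w) (Ch w)) = 3" using dw unfolding degree_def by simp
  then have "card (Ch w) = 2" using par_notin_Ch[of w] by (simp add: card_insert_disjoint)
  then obtain c1 c2 where c: "Ch w = {c1, c2}" "c1 \<noteq> c2" by (auto simp: card_2_iff)
  then have c1: "c1 \<in> Ch w" and c2: "c2 \<in> Ch w" by auto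
  have d12: "Dd a1 \<inter> Dd a2 = {}" "Dd a1 \<inter> Dd a3 = {}" "Dd a2 \<inter> Dd a3 = {}"
    using Dd_child_disj a ad by auto
  show ?thesis
  proof (cases "w \<in> Dd a1")
    case True
    then have "w \<notin> Dd a2" "w \<notin> Dd a3" using d12 by auto
    then show ?thesis using two3_core[OF a(2) a(3) _ wr _ _ c1 c2 c(2)] ad by auto
  next
    case n1: False
    show ?thesis
    proof (cases "w \<in> Dd a2")
      case True
      then have "w \<notin> Dd a3" using d12 by auto
      then show ?thesis using two3_core[OF a(1) a(3) _ wr n1 _ c1 c2 c(2)] ad by auto
    next
      case False
      then show ?thesis using two3_core[OF a(1) a(2) _ wr n1 _ c1 c2 c(2)] ad by auto
    qed
  qed
qed

theorem theorem4p3: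
  fixes E :: "'n::finite \<Rightarrow> 'n \<Rightarrow> bool"
  assumes "is_tree E"
  shows "in_G_SSP E \<longleftrightarrow>
           (\<forall>v. degree E v < 4) \<and>
           \<not> (\<exists>u v. u \<noteq> v \<and> degree E u = 3 \<and> degree E v = 3)"
proof
  assume G: "in_G_SSP E"
  show "(\<forall>v. degree E v < 4) \<and> \<not> (\<exists>u v. u \<noteq> v \<and> degree E u = 3 \<and> degree E v = 3)"
  proof (intro conjI allI notI)
    fix v
    show "degree E v < 4"
    proof (rule ccontr)
      assume "\<not> degree E v < 4"
      then show False using deg4_not[OF assms, of v] G by simp
    qed
  next
    assume "\<exists>u v. u \<noteq> v \<and> degree E u = 3 \<and> degree E v = 3"
    then show False using two3_not[OF assms] G by blast
  qed
next
  assume H: "(\<forall>v. degree E v < 4) \<and> \<not> (\<exists>u v. u \<noteq> v \<and> degree E u = 3 \<and> degree E v = 3)"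
  define c where "c = (if \<exists>v. degree E v = 3 then (SOME v. degree E v = 3) else undefined)"
  have sp: "spider E c"
  proof (intro spider.intro spider_axioms.intro)
    show "rtree E" using assms by unfold_locales
  next
    fix z assume zc: "z \<noteq> c"
    have "degree E z \<noteq> 3"
    proof
      assume z3: "degree E z = 3"
      then have ex: "\<exists>v. degree E v = 3" by blast
      then have "c = (SOME v. degree E v = 3)" unfolding c_def by simp
      moreover have "degree E (SOME v. degree E v = 3) = 3" using someI_ex[OF ex] .
      ultimately have "degree E c = 3" by simp
      then show False using H zc z3 by blast
    qed
    moreover have "degree E z < 4" using H by blast
    ultimately show "card {w. E z w} \<le> 2" unfolding degree_def by simp
  next
    have "degree E c < 4" using H by blast
    then show "card {w. E c w} \<le> 3" unfolding degree_def by simp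
  qed
  show "in_G_SSP E"
    unfolding in_G_SSP_def SSP_def
  proof (intro ballI allI impI)
    fix A :: "real^'n^'n" and X :: "real^'n^'n"
    assume A: "A \<in> S_graph E"
      and X: "symmetric_mat X \<and> (\<forall>i j. A$i$j * X$i$j = 0) \<and> (\<forall>i. X$i$i = 0) \<and> A ** X - X ** A = 0"
    have "ssp_ctx E c A X"
      by (intro ssp_ctx.intro sp ssp_ctx_axioms.intro) (use A X in auto)
    then show "X = 0" by (rule ssp_ctx.X_zero)
  qed
qed

end
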